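(* Let $G$ consist of two parallel paths $P_1,P_2$ from $s$ to $d$ (of arbitrary lengths), let the inputs be constant, $f_s(t)=\bar f>0$ and $b_d(t)=\bar b>0$ for all $t$, and let $g\in\mathcal F$ be non-linear, i.e. $g(x)\neq x$ for some $x\in[0,1/2]$. Then there exist leakage parameters $(l_v)_v$ with $l_{P_1}<l_{P_2}$ (so $P_1$ is the unique minimum-leakage path), depending on $g$, $\bar f$ and $\bar b$, and an initial configuration (positive pheromone levels on all edges and nonnegative initial flows), such that under the dynamics governed by $g$, $\nu^f_{ss_1}(t)$ does not converge to $1$ as $t\to\infty$.
   Context: Model. Directed graph $G=(V,E)$ with source $s$, destination $d$; discrete time $t=0,1,\dots$; pheromone levels $p_{uv}(t)\ge0$ on edges, forward flows $f_v(t)\ge0$ and backward flows $b_v(t)\ge0$ at vertices; leakage parameters $l_v\in[0,1]$ and decay parameter $\delta\in(0,1)$. $f_s(t)$ and $b_d(t)$ are exogenous inputs. Flow update: for $v\ne s$, $f_v(t+1)=(1-l_v)\sum_{z:(z,v)\in E}f_{zv}(t)$; for $u\ne d$, $b_u(t+1)=(1-l_u)\sum_{z:(u,z)\in E}b_{uz}(t)$; pheromone update $p_{uv}(t+1)=\delta(p_{uv}(t)+f_{uv}(t)+b_{uv}(t))$. Normalized pheromone levels $\nu^f_{uv}(t)=p_{uv}(t)/\sum_{z:(u,z)\in E}p_{uz}(t)$, $\nu^b_{uv}(t)=p_{uv}(t)/\sum_{z:(z,v)\in E}p_{zv}(t)$. Path leakage $l_P=1-\prod_{v\in P\setminus\{s,d\}}(1-l_v)$.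 Two parallel paths: $G$ is the union of two directed paths $P_1,P_2$ from $s$ to $d$ sharing only $s$ and $d$; $s_1,s_2$ are the successors of $s$ and $d_1,d_2$ the predecessors of $d$ on $P_1,P_2$. Family $\mathcal F$: continuous, monotonically non-decreasing functions $g:[0,1/2]\to[0,1]$ with $g(0)=0$ and $g(1/2)=1/2$. The dynamics governed by $g$: at every vertex of out-degree (resp. in-degree) one, the entire forward (resp. backward) flow goes along the unique edge; at $s$, with $x=\min(\nu^f_{ss_1}(t),\nu^f_{ss_2}(t))$, the edge attaining the minimum receives forward flow $g(x)f_s(t)$ and the other edge receives $(1-g(x))f_s(t)$ (if $x=1/2$ each receives $f_s(t)/2$); at $d$ the backward flow $b_d(t)$ is split between $(d_1,d)$ and $(d_2,d)$ in the same way using $\nu^b_{d_1d}(t),\nu^b_{d_2d}(t)$. The linear decision rule corresponds to $g(x)=x$. *)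

theory Defs
  imports "HOL-Analysis.Analysis"
begin

text \<open>
Path i (i = 1, 2) has n i internal vertices, indexed (i,k), k = 1..n i.
Its edges are indexed (i,k), k = 0..n i: edge (i,k) goes from vertex k to vertex k+1 of the path,
where vertex 0 is s and vertex (n i + 1) is d. So edge (i,0) = (s,s_i) and edge (i, n i) = (d_i,d).
A state is a triple (p, f, b): pheromone p i k on edge (i,k), forward flow f i k and backward
flow b i k at internal vertex (i,k). The other path is 3 - i.
\<close>

definition family_F :: "(real \<Rightarrow> real) set" where
  "family_F = {g. continuous_on {0..1/2} g \<and> mono_on {0..1/2} g \<and> g ` {0..1/2} \<subseteq> {0..1}
                  \<and> g 0 = 0 \<and> g (1/2) = 1/2}"

text \<open>Fraction of the flow sent along the edge with pheromone a, when the competing edge has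
pheromone b (normalized levels x = a/(a+b), y = b/(a+b)).\<close>
definition split_share :: "(real \<Rightarrow> real) \<Rightarrow> real \<Rightarrow> real \<Rightarrow> real" where
  "split_share g a b =
     (let x = a / (a + b); y = b / (a + b)
      in if x < y then g x else if y < x then 1 - g y else 1/2)"

definition fwd_edge :: "(real \<Rightarrow> real) \<Rightarrow> real \<Rightarrow> (nat \<Rightarrow> nat \<Rightarrow> real) \<Rightarrow> (nat \<Rightarrow> nat \<Rightarrow> real)
    \<Rightarrow> nat \<Rightarrow> nat \<Rightarrow> real" where
  "fwd_edge g fbar p f i k =
     (if k = 0 then split_share g (p i 0) (p (3 - i) 0) * fbar else f i k)"

definition bwd_edge :: "(real \<Rightarrow> real) \<Rightarrow> real \<Rightarrow> (nat \<Rightarrow> nat) \<Rightarrow> (nat \<Rightarrow> nat \<Rightarrow> real)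
    \<Rightarrow> (nat \<Rightarrow> nat \<Rightarrow> real) \<Rightarrow> nat \<Rightarrow> nat \<Rightarrow> real" where
  "bwd_edge g bbar n p b i k =
     (if k = n i then split_share g (p i (n i)) (p (3 - i) (n (3 - i))) * bbar else b i (Suc k))"

type_synonym state = "(nat \<Rightarrow> nat \<Rightarrow> real) \<times> (nat \<Rightarrow> nat \<Rightarrow> real) \<times> (nat \<Rightarrow> nat \<Rightarrow> real)"

definition step :: "(real \<Rightarrow> real) \<Rightarrow> real \<Rightarrow> real \<Rightarrow> real \<Rightarrow> (nat \<Rightarrow> nat) \<Rightarrow> (nat \<Rightarrow> nat \<Rightarrow> real)
    \<Rightarrow> state \<Rightarrow> state" where
  "step g \<delta> fbar bbar n l st =
     (case st of (p, f, b) \<Rightarrow>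
       ((\<lambda>i k. \<delta> * (p i k + fwd_edge g fbar p f i k + bwd_edge g bbar n p b i k)),
        (\<lambda>i k. (1 - l i k) * fwd_edge g fbar p f i (k - 1)),
        (\<lambda>i k. (1 - l i k) * bwd_edge g bbar n p b i k)))"

primrec traj :: "(real \<Rightarrow> real) \<Rightarrow> real \<Rightarrow> real \<Rightarrow> real \<Rightarrow> (nat \<Rightarrow> nat) \<Rightarrow> (nat \<Rightarrow> nat \<Rightarrow> real)
    \<Rightarrow> state \<Rightarrow> nat \<Rightarrow> state" where
  "traj g \<delta> fbar bbar n l st0 0 = st0"
| "traj g \<delta> fbar bbar n l st0 (Suc t) = step g \<delta> fbar bbar n l (traj g \<delta> fbar bbar n l st0 t)"

definition nu_f_ss1 :: "state \<Rightarrow> real" where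
  "nu_f_ss1 st = (case st of (p, f, b) \<Rightarrow> p 1 0 / (p 1 0 + p 2 0))"

definition path_leak :: "(nat \<Rightarrow> nat \<Rightarrow> real) \<Rightarrow> (nat \<Rightarrow> nat) \<Rightarrow> nat \<Rightarrow> real" where
  "path_leak l n i = 1 - (\<Prod>k\<in>{1..n i}. 1 - l i k)"

end

theory Submission
  imports Defs
begin


lemma fixed_point:
  fixes Fs Bs lam :: "nat \<Rightarrow> real"
  assumes n1: "n 1 \<ge> 1" and n2: "n 2 \<ge> 1" and d0: "0 < \<delta>" and d1: "\<delta> < 1"
  assumes c_def: "c = \<delta> / (1 - \<delta>)"
    and p0_def: "p0 = (\<lambda>i k. c * (Fs i * (if k = 0 then 1 else lam i) + Bs i * (if k = 0 then lam i else 1)))"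
    and f0_def: "f0 = (\<lambda>i k. Fs i * lam i)"
    and b0_def: "b0 = (\<lambda>i k. Bs i * (if k = 1 then lam i else 1))"
    and l_def: "l = (\<lambda>i k. if k = 1 then 1 - lam i else (0::real))"
    and s1: "split_share g (p0 1 0) (p0 2 0) * fbar = Fs 1"
      and s2: "split_share g (p0 2 0) (p0 1 0) * fbar = Fs 2"
      and e1: "split_share g (p0 1 (n 1)) (p0 2 (n 2)) * bbar = Bs 1"
      and e2: "split_share g (p0 2 (n 2)) (p0 1 (n 1)) * bbar = Bs 2"
  shows "nu_f_ss1 (traj g \<delta> fbar bbar n l (p0, f0, b0) t) = nu_f_ss1 (p0, f0, b0)"
proof -
  define R where "R = (\<lambda>(p::nat\<Rightarrow>nat\<Rightarrow>real, f::nat\<Rightarrow>nat\<Rightarrow>real, b::nat\<Rightarrow>nat\<Rightarrow>real).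
     \<forall>i\<in>{1,2}. (\<forall>k\<le>n i. p i k = p0 i k) \<and> (\<forall>k\<in>{1..n i}. f i k = f0 i k \<and> b i k = b0 i k))"
  have cfix: "\<delta> * (c * X + X) = c * X" for X
    using d0 d1 unfolding c_def by (simp add: field_simps)
  have pres: "R (step g \<delta> fbar bbar n l (p, f, b))" if RR: "R (p, f, b)" for p f b
  proof -
    have P: "\<And>i k. i \<in> {1,2} \<Longrightarrow> k \<le> n i \<Longrightarrow> p i k = p0 i k"
     and Fl: "\<And>i k. i \<in> {1,2} \<Longrightarrow> 1 \<le> k \<Longrightarrow> k \<le> n i \<Longrightarrow> f i k = f0 i k"
     and Bl: "\<And>i k. i \<in> {1,2} \<Longrightarrow> 1 \<le> k \<Longrightarrow> k \<le> n i \<Longrightarrow> b i k = b0 i k"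
      using RR unfolding R_def by auto
    have fw: "fwd_edge g fbar p f i k = Fs i * (if k = 0 then 1 else lam i)"
      if i: "i \<in> {1,2}" and k: "k \<le> n i" for i k
    proof (cases "k = 0")
      case True
      then show ?thesis using i P[of 1 0] P[of 2 0] s1 s2
        by (auto simp: fwd_edge_def)
    next
      case False
      then show ?thesis using i k Fl[of i k] by (auto simp: fwd_edge_def f0_def)
    qed
    have bw: "bwd_edge g bbar n p b i k = Bs i * (if k = 0 then lam i else 1)"
      if i: "i \<in> {1,2}" and k: "k \<le> n i" for i k
    proof (cases "k = n i")
      case True
      then show ?thesis using i n1 n2 P[of 1 "n 1"] P[of 2 "n 2"] e1 e2
        by (auto simp: bwd_edge_def)
    next
      case False
      then show ?thesis using i k Bl[of i "Suc k"] by (auto simp: bwd_edge_def b0_def)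
    qed
    show ?thesis
      unfolding R_def step_def
    proof (simp only: prod.case, intro ballI conjI allI impI)
      fix i k assume i: "i \<in> {1,2}" and k: "k \<le> n i"
      show "\<delta> * (p i k + fwd_edge g fbar p f i k + bwd_edge g bbar n p b i k) = p0 i k"
        using P[OF i k] fw[OF i k] bw[OF i k] cfix[of "Fs i * (if k = 0 then 1 else lam i) + Bs i * (if k = 0 then lam i else 1)"]
        unfolding p0_def by (simp add: algebra_simps)
    next
      fix i k assume i: "i \<in> {1,2}" and k: "k \<in> {1..n i}"
      show "(1 - l i k) * fwd_edge g fbar p f i (k - 1) = f0 i k"
        using fw[OF i, of "k-1"] k by (auto simp: l_def f0_def)
      show "(1 - l i k) * bwd_edge g bbar n p b i k = b0 i k"
        using bw[OF i, of k] k by (auto simp: l_def b0_def)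
    qed
  qed
  have "R (traj g \<delta> fbar bbar n l (p0, f0, b0) t)"
  proof (induction t)
    case 0 then show ?case by (simp add: R_def)
  next
    case (Suc t)
    then show ?case using pres by (cases "traj g \<delta> fbar bbar n l (p0, f0, b0) t") auto
  qed
  then show ?thesis unfolding R_def nu_f_ss1_def
    by (cases "traj g \<delta> fbar bbar n l (p0, f0, b0) t") auto
qed



lemma split_scale:
  assumes "c > 0" shows "split_share g (c*P) (c*Q) = split_share g P Q"
proof -
  have "c*P/(c*P+c*Q) = P/(P+Q)" "c*Q/(c*P+c*Q) = Q/(P+Q)"
    using assms by (simp_all add: distrib_left[symmetric])
  then show ?thesis by (simp add: split_share_def Let_def)
qed

lemma ratio_eq:
  fixes P Q x :: real
  assumes "P > 0" "Q \<ge> 0" "P * (1 - x) = x * Q" shows "P / (P + Q) = x"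
  using assms by (simp add: field_simps)

lemma split_minor:
  fixes P Q x :: real
  assumes "P > 0" "Q > 0" "P / (P + Q) = x" "x < 1/2"
  shows "split_share g P Q = g x" "split_share g Q P = 1 - g x"
proof -
  have q: "Q / (P + Q) = 1 - x" using assms by (simp add: field_simps)
  have q': "Q / (Q + P) = 1 - x" "P / (Q + P) = x" using q assms(3) by (simp_all add: add.commute)
  show "split_share g P Q = g x" using assms q by (simp add: split_share_def Let_def)
  show "split_share g Q P = 1 - g x" using assms q' by (simp add: split_share_def Let_def)
qed

lemma split_half:
  fixes P :: real assumes "P > 0" shows "split_share g P P = 1/2"
  using assms by (simp add: split_share_def Let_def)

lemma prod_leak:
  fixes m :: nat assumes "m \<ge> 1"
  shows "(\<Prod>k\<in>{1..m}. 1 - (if k = 1 then 1 - L else (0::real))) = L"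
proof -
  have "(\<Prod>k\<in>{1..m}. 1 - (if k = 1 then 1 - L else (0::real))) = (\<Prod>k\<in>{1..m}. if k = 1 then L else 1)"
    by (rule prod.cong) auto
  also have "\<dots> = L" using assms by (subst prod.delta) auto
  finally show ?thesis .
qed

lemma assemble:
  fixes n :: "nat \<Rightarrow> nat" and \<delta> fbar bbar :: real and g :: "real \<Rightarrow> real"
    and F1 F2 B1 B2 L1 L2 :: real
  assumes n1: "n 1 \<ge> 1" and n2: "n 2 \<ge> 1" and d0: "0 < \<delta>" and d1: "\<delta> < 1"
    and L: "0 \<le> L2" "L2 < L1" "L1 \<le> 1"
    and FB: "F1 \<ge> 0" "F2 \<ge> 0" "B1 > 0" "B2 > 0" "F1 + B1 * L1 > 0" "F2 + B2 * L2 > 0"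
    and s1: "split_share g (F1 + B1 * L1) (F2 + B2 * L2) * fbar = F1"
    and s2: "split_share g (F2 + B2 * L2) (F1 + B1 * L1) * fbar = F2"
    and e1: "split_share g (F1 * L1 + B1) (F2 * L2 + B2) * bbar = B1"
    and e2: "split_share g (F2 * L2 + B2) (F1 * L1 + B1) * bbar = B2"
    and nu: "(F1 + B1 * L1) / ((F1 + B1 * L1) + (F2 + B2 * L2)) \<noteq> 1"
  shows "\<exists>l :: nat \<Rightarrow> nat \<Rightarrow> real.
           (\<forall>i\<in>{1,2}. \<forall>k\<in>{1..n i}. 0 \<le> l i k \<and> l i k \<le> 1)
         \<and> path_leak l n 1 < path_leak l n 2
         \<and> (\<exists>p0 f0 b0.
              (\<forall>i\<in>{1,2}. \<forall>k\<in>{0..n i}. 0 < p0 i k)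
            \<and> (\<forall>i\<in>{1,2}. \<forall>k\<in>{1..n i}. 0 \<le> f0 i k \<and> 0 \<le> b0 i k)
            \<and> \<not> ((\<lambda>t. nu_f_ss1 (traj g \<delta> fbar bbar n l (p0, f0, b0) t)) \<longlonglongrightarrow> 1))"
proof -
  define Fs where "Fs = (\<lambda>i::nat. if i = 1 then F1 else F2)"
  define Bs where "Bs = (\<lambda>i::nat. if i = 1 then B1 else B2)"
  define lam where "lam = (\<lambda>i::nat. if i = 1 then L1 else L2)"
  define c where "c = \<delta> / (1 - \<delta>)"
  have c0: "c > 0" using d0 d1 by (simp add: c_def)
  define p0 where "p0 = (\<lambda>(i::nat) (k::nat). c * (Fs i * (if k = 0 then 1 else lam i) + Bs i * (if k = 0 then lam i else 1)))"
  define f0 where "f0 = (\<lambda>(i::nat) (k::nat). Fs i * lam i)"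
  define b0 where "b0 = (\<lambda>i (k::nat). Bs i * (if k = 1 then lam i else 1))"
  define l where "l = (\<lambda>i (k::nat). if k = 1 then 1 - lam i else (0::real))"
  have p10: "p0 1 0 = c * (F1 + B1 * L1)" and p20: "p0 2 0 = c * (F2 + B2 * L2)"
    by (simp_all add: p0_def Fs_def Bs_def lam_def)
  have p1n: "p0 1 (n 1) = c * (F1 * L1 + B1)" and p2n: "p0 2 (n 2) = c * (F2 * L2 + B2)"
    using n1 n2 by (simp_all add: p0_def Fs_def Bs_def lam_def)
  have fixp: "nu_f_ss1 (traj g \<delta> fbar bbar n l (p0, f0, b0) t) = nu_f_ss1 (p0, f0, b0)" for t
    apply (rule fixed_point[OF n1 n2 d0 d1 c_def p0_def f0_def b0_def l_def])
    using s1 s2 e1 e2 c0 by (simp_all only: p10 p20 p1n p2n split_scale Fs_def Bs_def if_True) simp_all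
  have nuv: "nu_f_ss1 (p0, f0, b0) = (F1 + B1 * L1) / ((F1 + B1 * L1) + (F2 + B2 * L2))"
    using p10 p20 c0 by (simp add: nu_f_ss1_def distrib_left[symmetric])
  show ?thesis
  proof (rule exI[of _ l], intro conjI)
    show "\<forall>i\<in>{1,2}. \<forall>k\<in>{1..n i}. 0 \<le> l i k \<and> l i k \<le> 1"
      using L by (auto simp: l_def lam_def)
    have "path_leak l n 1 = 1 - L1" "path_leak l n 2 = 1 - L2"
      unfolding path_leak_def l_def using prod_leak[OF n1, of "lam 1"] prod_leak[OF n2, of "lam 2"]
      by (simp_all add: lam_def)
    then show "path_leak l n 1 < path_leak l n 2" using L by simp
    show "\<exists>p0 f0 b0.
              (\<forall>i\<in>{1,2}. \<forall>k\<in>{0..n i}. 0 < p0 i k)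
            \<and> (\<forall>i\<in>{1,2}. \<forall>k\<in>{1..n i}. 0 \<le> f0 i k \<and> 0 \<le> b0 i k)
            \<and> \<not> ((\<lambda>t. nu_f_ss1 (traj g \<delta> fbar bbar n l (p0, f0, b0) t)) \<longlonglongrightarrow> 1)"
    proof (intro exI conjI)
      show "\<forall>i\<in>{1,2}. \<forall>k\<in>{0..n i}. 0 < p0 i k"
      proof -
        have "0 < F1 * L1 + B1" "0 < F2 * L2 + B2" using FB L by (simp_all add: add_nonneg_pos)
        then show ?thesis using FB c0 by (auto simp: p0_def Fs_def Bs_def lam_def)
      qed
      show "\<forall>i\<in>{1,2}. \<forall>k\<in>{1..n i}. 0 \<le> f0 i k \<and> 0 \<le> b0 i k"
        using FB L by (auto simp: f0_def b0_def Fs_def Bs_def lam_def)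
      show "\<not> ((\<lambda>t. nu_f_ss1 (traj g \<delta> fbar bbar n l (p0, f0, b0) t)) \<longlonglongrightarrow> 1)"
      proof
        assume "(\<lambda>t. nu_f_ss1 (traj g \<delta> fbar bbar n l (p0, f0, b0) t)) \<longlonglongrightarrow> 1"
        then have "(\<lambda>t. nu_f_ss1 (p0, f0, b0)) \<longlonglongrightarrow> 1" by (simp add: fixp)
        then have "nu_f_ss1 (p0, f0, b0) = 1" by (simp add: LIMSEQ_const_iff)
        then show False using nu nuv by simp
      qed
    qed
  qed
qed



lemma caseA:
  fixes n :: "nat \<Rightarrow> nat" and \<delta> fbar bbar :: real and g :: "real \<Rightarrow> real"
  assumes n1: "n 1 \<ge> 1" and n2: "n 2 \<ge> 1" and d0: "0 < \<delta>" and d1: "\<delta> < 1"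
    and F: "fbar > 0" and B: "bbar > 0"
    and cont: "continuous_on {0..1/2} g" and mono: "mono_on {0..1/2} g"
    and g0: "g 0 = 0" and gh: "g (1/2) = 1/2"
    and x0: "0 \<le> x0" "x0 \<le> 1/2" and gx0: "g x0 < x0"
  shows "\<exists>l :: nat \<Rightarrow> nat \<Rightarrow> real.
           (\<forall>i\<in>{1,2}. \<forall>k\<in>{1..n i}. 0 \<le> l i k \<and> l i k \<le> 1)
         \<and> path_leak l n 1 < path_leak l n 2
         \<and> (\<exists>p0 f0 b0.
              (\<forall>i\<in>{1,2}. \<forall>k\<in>{0..n i}. 0 < p0 i k)
            \<and> (\<forall>i\<in>{1,2}. \<forall>k\<in>{1..n i}. 0 \<le> f0 i k \<and> 0 \<le> b0 i k)
            \<and> \<not> ((\<lambda>t. nu_f_ss1 (traj g \<delta> fbar bbar n l (p0, f0, b0) t)) \<longlonglongrightarrow> 1))"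
proof -
  have x0p: "0 < x0" using x0 gx0 g0 by (cases "x0 = 0") auto
  have x0h: "x0 < 1/2" using x0 gx0 gh by (cases "x0 = 1/2") auto
  define v where "v = min (x0 - g x0) (bbar * (1 - 2 * x0) / (2 * fbar))"
  have vp: "v > 0" using gx0 x0h F B by (simp add: v_def)
  have v1: "v \<le> x0 - g x0" "v \<le> bbar * (1 - 2 * x0) / (2 * fbar)" by (simp_all add: v_def)
  have "continuous_on {0..x0} g" using x0 by (intro continuous_on_subset[OF cont]) auto
  then have "continuous_on {0..x0} (\<lambda>x. x - g x)" by (intro continuous_intros)
  then obtain x where x: "0 \<le> x" "x \<le> x0" "x - g x = v"
    using IVT'[of "\<lambda>x. x - g x" 0 v x0] vp v1 x0 g0 by auto
  define a where "a = g x"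
  have xa: "a = x - v" using x by (simp add: a_def)
  have a0: "a \<ge> 0" using mono_onD[OF mono, of 0 x] x x0 g0 by (simp add: a_def)
  have xp: "x > 0" using x vp a0 xa by linarith
  have ax: "a < x" using xa vp by simp
  have ah: "a < 1/2" using ax x x0h by simp
  define L1 where "L1 = 2 * fbar * (1 - a) * v / (bbar * (1 - x - a))"
  define L2 where "L2 = a * L1 / (1 - a)"
  have den: "1 - x - a > 0" using ax x x0h by simp
  have L1p: "L1 > 0" using F B vp ah den by (simp add: L1_def)
  have "2 * fbar * v \<le> bbar * (1 - 2 * x0)" using v1(2) F by (simp add: field_simps)
  also have "\<dots> \<le> bbar * (1 - x - a)" using B x ax by (intro mult_left_mono) auto
  finally have le1: "2 * fbar * v \<le> bbar * (1 - x - a)" .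
  have "(1 - a) * (2 * fbar * v) \<le> 2 * fbar * v"
    using a0 ah F vp by (intro mult_left_le_one_le) auto
  with le1 have "2 * fbar * (1 - a) * v \<le> bbar * (1 - x - a)" by (simp add: algebra_simps)
  then have L1le: "L1 \<le> 1" using B den by (simp add: L1_def divide_le_eq_1)
  have L2n: "0 \<le> L2" using a0 L1p ah by (simp add: L2_def)
  have L2lt: "L2 < L1"
  proof -
    have "a / (1 - a) < 1" using ah by (simp add: field_simps)
    then have "L1 * (a / (1 - a)) < L1 * 1" using L1p by (intro mult_strict_left_mono) auto
    then show ?thesis by (simp add: L2_def field_simps)
  qed
  define P where "P = a * fbar + bbar / 2 * L1"
  define Q where "Q = (1 - a) * fbar + bbar / 2 * L2"
  have Pp: "P > 0" using a0 F B L1p by (simp add: P_def add_nonneg_pos)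
  have Qp: "Q > 0" using ah F B L2n by (simp add: Q_def add_pos_nonneg)
  have key: "P * (1 - x) = x * Q"
  proof -
    have h1: "bbar / 2 * L1 * (1 - x - a) = fbar * (1 - a) * v"
    proof -
      have "bbar * (1 - x - a) \<noteq> 0" using B den by simp
      then have "L1 * (bbar * (1 - x - a)) = 2 * fbar * (1 - a) * v"
        unfolding L1_def by simp
      moreover have "bbar / 2 * L1 * (1 - x - a) = (L1 * (bbar * (1 - x - a))) / 2" by (simp add: field_simps)
      ultimately show ?thesis by simp
    qed
    have h2: "L2 * (1 - a) = a * L1" using ah by (simp add: L2_def field_simps)
    have e1: "P * (1 - x) - x * Q = (a - x) * fbar + bbar / 2 * (L1 * (1 - x) - x * L2)"
      unfolding P_def Q_def by (simp add: field_simps)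
    have "(L1 * (1 - x) - x * L2) * (1 - a) = L1 * (1 - x) * (1 - a) - x * (L2 * (1 - a))"
      by (simp add: algebra_simps)
    also have "\<dots> = L1 * (1 - x) * (1 - a) - x * (a * L1)" using h2 by simp
    also have "\<dots> = L1 * (1 - x - a)" by (simp add: algebra_simps)
    finally have e2': "(L1 * (1 - x) - x * L2) * (1 - a) = L1 * (1 - x - a)" .
    have e2: "L1 * (1 - x) - x * L2 = L1 * (1 - x - a) / (1 - a)"
      using ah e2' by (simp add: eq_divide_eq)
    have e3: "bbar / 2 * (L1 * (1 - x - a) / (1 - a)) = fbar * v"
    proof -
      have "bbar / 2 * (L1 * (1 - x - a) / (1 - a)) = (bbar / 2 * L1 * (1 - x - a)) / (1 - a)"
        by simp
      also have "\<dots> = fbar * (1 - a) * v / (1 - a)" using h1 by simp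
      also have "\<dots> = fbar * v" using ah by simp
      finally show ?thesis .
    qed
    have "P * (1 - x) - x * Q = (a - x) * fbar + fbar * v" using e1 e2 e3 by simp
    also have "\<dots> = fbar * (a - x + v)" by (simp add: algebra_simps)
    also have "\<dots> = 0" using xa by simp
    finally have "P * (1 - x) - x * Q = 0" .
    then show ?thesis by simp
  qed
  have rat: "P / (P + Q) = x" using ratio_eq[OF Pp _ key] Qp by simp
  have xh: "x < 1/2" using x x0h by simp
  have eqd: "a * fbar * L1 + bbar / 2 = (1 - a) * fbar * L2 + bbar / 2"
    using ah by (simp add: L2_def field_simps)
  have ep: "a * fbar * L1 + bbar / 2 > 0" using a0 F L1p B by (simp add: add_nonneg_pos)
  show ?thesis
  proof (rule assemble[OF n1 n2 d0 d1 L2n L2lt L1le, of "a * fbar" "(1 - a) * fbar" "bbar/2" "bbar/2"])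
    show "0 \<le> a * fbar" "0 \<le> (1 - a) * fbar" "0 < bbar / 2" "0 < bbar / 2"
      using a0 ah F B by auto
    show "0 < a * fbar + bbar / 2 * L1" "0 < (1 - a) * fbar + bbar / 2 * L2"
      using Pp Qp by (simp_all add: P_def Q_def)
    show "split_share g (a * fbar + bbar / 2 * L1) ((1 - a) * fbar + bbar / 2 * L2) * fbar = a * fbar"
      using split_minor(1)[OF Pp Qp rat xh] by (simp add: P_def Q_def a_def)
    show "split_share g ((1 - a) * fbar + bbar / 2 * L2) (a * fbar + bbar / 2 * L1) * fbar = (1 - a) * fbar"
      using split_minor(2)[OF Pp Qp rat xh] by (simp add: P_def Q_def a_def)
    show "split_share g (a * fbar * L1 + bbar / 2) ((1 - a) * fbar * L2 + bbar / 2) * bbar = bbar / 2"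
      unfolding eqd[symmetric] using split_half[OF ep, of g] by simp
    show "split_share g ((1 - a) * fbar * L2 + bbar / 2) (a * fbar * L1 + bbar / 2) * bbar = bbar / 2"
      unfolding eqd[symmetric] using split_half[OF ep, of g] by simp
    show "(a * fbar + bbar / 2 * L1) / (a * fbar + bbar / 2 * L1 + ((1 - a) * fbar + bbar / 2 * L2)) \<noteq> 1"
      using rat xh by (simp add: P_def Q_def)
  qed
qed



lemma caseB:
  fixes n :: "nat \<Rightarrow> nat" and \<delta> fbar bbar :: real and g :: "real \<Rightarrow> real"
  assumes n1: "n 1 \<ge> 1" and n2: "n 2 \<ge> 1" and d0: "0 < \<delta>" and d1: "\<delta> < 1"
    and F: "fbar > 0" and B: "bbar > 0"
    and cont: "continuous_on {0..1/2} g" and mono: "mono_on {0..1/2} g"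
    and g0: "g 0 = 0" and gh: "g (1/2) = 1/2"
    and x0: "0 \<le> x0" "x0 \<le> 1/2" and gx0: "g x0 > x0"
  shows "\<exists>l :: nat \<Rightarrow> nat \<Rightarrow> real.
           (\<forall>i\<in>{1,2}. \<forall>k\<in>{1..n i}. 0 \<le> l i k \<and> l i k \<le> 1)
         \<and> path_leak l n 1 < path_leak l n 2
         \<and> (\<exists>p0 f0 b0.
              (\<forall>i\<in>{1,2}. \<forall>k\<in>{0..n i}. 0 < p0 i k)
            \<and> (\<forall>i\<in>{1,2}. \<forall>k\<in>{1..n i}. 0 \<le> f0 i k \<and> 0 \<le> b0 i k)
            \<and> \<not> ((\<lambda>t. nu_f_ss1 (traj g \<delta> fbar bbar n l (p0, f0, b0) t)) \<longlonglongrightarrow> 1))"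
proof -
  have x0p: "0 < x0" using x0 gx0 g0 by (cases "x0 = 0") auto
  have x0h: "x0 < 1/2" using x0 gx0 gh by (cases "x0 = 1/2") auto
  define \<Phi> where "\<Phi> = (\<lambda>u. (1 - g u) * (g u - u) / u)"
  have gbnd: "g x0 \<le> g u \<and> g u \<le> 1/2" if "x0 \<le> u" "u \<le> 1/2" for u
    using mono_onD[OF mono, of x0 u] mono_onD[OF mono, of u "1/2"] that x0 gh by auto
  have gx0h: "g x0 \<le> 1/2" using gbnd[of x0] x0h by simp
  define \<phi>0 where "\<phi>0 = \<Phi> x0"
  have \<phi>0p: "\<phi>0 > 0" using gx0 gx0h x0p by (simp add: \<phi>0_def \<Phi>_def)
  have \<Phi>h: "\<Phi> (1/2) = 0" by (simp add: \<Phi>_def gh)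
  have "continuous_on {x0..1/2} g" using x0 by (intro continuous_on_subset[OF cont]) auto
  then have contP: "continuous_on {x0..1/2} \<Phi>"
    unfolding \<Phi>_def using x0p by (intro continuous_intros) auto
  define cc where "cc = min (min (\<phi>0 / (bbar * bbar)) (\<phi>0 / (fbar * fbar))) (1 / (4 * fbar * bbar))"
  have ccp: "cc > 0" using \<phi>0p F B by (simp add: cc_def)
  have cc1: "cc * (bbar * bbar) \<le> \<phi>0" "cc * (fbar * fbar) \<le> \<phi>0" "cc * (4 * fbar * bbar) \<le> 1"
  proof -
    have "cc \<le> \<phi>0 / (bbar * bbar)" "cc \<le> \<phi>0 / (fbar * fbar)" "cc \<le> 1 / (4 * fbar * bbar)"
      by (simp_all add: cc_def)
    moreover have "bbar * bbar > 0" "fbar * fbar > 0" "4 * fbar * bbar > 0" using F B by auto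
    ultimately show "cc * (bbar * bbar) \<le> \<phi>0" "cc * (fbar * fbar) \<le> \<phi>0" "cc * (4 * fbar * bbar) \<le> 1"
      by (simp_all add: pos_le_divide_eq)
  qed
  have pick: "\<exists>u. x0 \<le> u \<and> u < 1/2 \<and> \<Phi> u = y" if yy: "0 < y" "y \<le> \<phi>0" for y
  proof -
    obtain u where "x0 \<le> u" "u \<le> 1/2" "\<Phi> u = y"
      using IVT2'[of \<Phi> "1/2" y x0, OF _ _ _ contP] yy \<Phi>h x0h \<phi>0_def by auto
    moreover have "u \<noteq> 1/2"
    proof
      assume "u = 1/2" then have "\<Phi> u = \<Phi> (1/2)" by (rule arg_cong)
      then show False using \<open>\<Phi> u = y\<close> \<Phi>h yy by linarith
    qed
    ultimately show ?thesis by auto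
  qed
  obtain u where u: "x0 \<le> u" "u < 1/2" "\<Phi> u = cc * (bbar * bbar)"
    using pick[of "cc * (bbar * bbar)"] ccp B cc1 by auto
  obtain w where w: "x0 \<le> w" "w < 1/2" "\<Phi> w = cc * (fbar * fbar)"
    using pick[of "cc * (fbar * fbar)"] ccp F cc1 by auto
  define gu where "gu = g u"
  define gw where "gw = g w"
  have gub: "0 < gu" "gu \<le> 1/2" using gbnd[of u] u gx0 x0p by (auto simp: gu_def)
  have gwb: "0 < gw" "gw \<le> 1/2" using gbnd[of w] w gx0 x0p by (auto simp: gw_def)
  have up: "u > 0" and wp: "w > 0" using u w x0p by auto
  have idu: "(1 - gu) * (gu - u) = cc * (bbar * bbar) * u"
    using u(3) up by (simp add: \<Phi>_def gu_def field_simps)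
  have idw: "(1 - gw) * (gw - w) = cc * (fbar * fbar) * w"
    using w(3) wp by (simp add: \<Phi>_def gw_def field_simps)
  define L1 where "L1 = cc * fbar * bbar / ((1 - gu) * (1 - gw))"
  have dpos: "(1 - gu) * (1 - gw) \<ge> 1/4"
  proof -
    have "(1/2) * (1/2) \<le> (1 - gu) * (1 - gw)" using gub gwb by (intro mult_mono) auto
    then show ?thesis by simp
  qed
  have L1p: "L1 > 0" using ccp F B gub gwb by (simp add: L1_def)
  have L1le: "L1 \<le> 1"
  proof -
    have "cc * fbar * bbar \<le> 1/4" using cc1(3) by (simp add: field_simps)
    also have "\<dots> \<le> (1 - gu) * (1 - gw)" by (rule dpos)
    finally show ?thesis using dpos by (simp add: L1_def)
  qed
  have dnz: "(1 - gu) * (1 - gw) \<noteq> 0" using dpos by auto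
  have L1e: "L1 * ((1 - gu) * (1 - gw)) = cc * fbar * bbar" unfolding L1_def using dnz by simp

  define F1 where "F1 = (1 - gu) * fbar"
  define F2 where "F2 = gu * fbar"
  define B1 where "B1 = (1 - gw) * bbar"
  define B2 where "B2 = gw * bbar"
  define P where "P = F1 + B1 * L1"
  define Q where "Q = F2 + B2 * 0"
  have Pp: "P > 0" using gub gwb F B L1p by (simp add: P_def F1_def B1_def add_pos_pos)
  have Qp: "Q > 0" using gub F by (simp add: Q_def F2_def)
  have keys: "Q * (1 - u) = u * P"
  proof -
    have h: "Q * (1 - u) - u * P = fbar * (gu - u) - u * bbar * (1 - gw) * L1"
      by (simp add: P_def Q_def F1_def F2_def B1_def algebra_simps)
    have "(1 - gu) * (Q * (1 - u) - u * P) = (1 - gu) * (fbar * (gu - u) - u * bbar * (1 - gw) * L1)"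
      by (simp only: h)
    also have "\<dots> = fbar * ((1 - gu) * (gu - u)) - u * bbar * (L1 * ((1 - gu) * (1 - gw)))"
      by (simp add: algebra_simps)
    also have "\<dots> = 0" unfolding idu L1e by (simp add: algebra_simps)
    finally show ?thesis using gub by simp
  qed
  have rats: "Q / (Q + P) = u" using ratio_eq[OF Qp _ keys] Pp by simp
  define P' where "P' = F1 * L1 + B1"
  define Q' where "Q' = F2 * 0 + B2"
  have P'p: "P' > 0" using gub gwb F B L1p by (simp add: P'_def F1_def B1_def add_pos_pos)
  have Q'p: "Q' > 0" using gwb B by (simp add: Q'_def B2_def)
  have keyd: "Q' * (1 - w) = w * P'"
  proof -
    have h: "Q' * (1 - w) - w * P' = bbar * (gw - w) - w * fbar * (1 - gu) * L1"
      by (simp add: P'_def Q'_def F1_def B2_def B1_def algebra_simps)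
    have "(1 - gw) * (Q' * (1 - w) - w * P') = (1 - gw) * (bbar * (gw - w) - w * fbar * (1 - gu) * L1)"
      by (simp only: h)
    also have "\<dots> = bbar * ((1 - gw) * (gw - w)) - w * fbar * (L1 * ((1 - gu) * (1 - gw)))"
      by (simp add: algebra_simps)
    also have "\<dots> = 0" unfolding idw L1e by (simp add: algebra_simps)
    finally show ?thesis using gwb by simp
  qed
  have ratd: "Q' / (Q' + P') = w" using ratio_eq[OF Q'p _ keyd] P'p by simp
  show ?thesis
  proof (rule assemble[OF n1 n2 d0 d1 _ L1p L1le, of F1 F2 B1 B2])
    show "0 \<le> F1" "0 \<le> F2" "0 < B1" "0 < B2"
      using gub gwb F B by (simp_all add: F1_def F2_def B1_def B2_def)
    show "0 < F1 + B1 * L1" "0 < F2 + B2 * 0" using Pp Qp by (simp_all add: P_def Q_def)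
    show "0 \<le> (0::real)" by simp
    show "split_share g (F1 + B1 * L1) (F2 + B2 * 0) * fbar = F1"
      using split_minor(2)[OF Qp Pp rats u(2)] by (simp add: P_def Q_def F1_def gu_def)
    show "split_share g (F2 + B2 * 0) (F1 + B1 * L1) * fbar = F2"
      using split_minor(1)[OF Qp Pp rats u(2)] by (simp add: P_def Q_def F2_def gu_def)
    show "split_share g (F1 * L1 + B1) (F2 * 0 + B2) * bbar = B1"
      using split_minor(2)[OF Q'p P'p ratd w(2)] by (simp add: P'_def Q'_def B1_def gw_def)
    show "split_share g (F2 * 0 + B2) (F1 * L1 + B1) * bbar = B2"
      using split_minor(1)[OF Q'p P'p ratd w(2)] by (simp add: P'_def Q'_def B2_def gw_def)
    have "P / (P + Q) = 1 - u" using rats Pp Qp by (simp add: field_simps)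
    then show "(F1 + B1 * L1) / (F1 + B1 * L1 + (F2 + B2 * 0)) \<noteq> 1"
      using up by (simp add: P_def Q_def)
  qed
qed


theorem proposition2:
  fixes n :: "nat \<Rightarrow> nat" and \<delta> fbar bbar :: real and g :: "real \<Rightarrow> real"
  assumes "n 1 \<ge> 1" and "n 2 \<ge> 1"
    and "0 < \<delta>" and "\<delta> < 1"
    and "fbar > 0" and "bbar > 0"
    and "g \<in> family_F"
    and "\<exists>x\<in>{0..1/2}. g x \<noteq> x"
  shows "\<exists>l :: nat \<Rightarrow> nat \<Rightarrow> real.
           (\<forall>i\<in>{1,2}. \<forall>k\<in>{1..n i}. 0 \<le> l i k \<and> l i k \<le> 1)
         \<and> path_leak l n 1 < path_leak l n 2
         \<and> (\<exists>p0 f0 b0.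
              (\<forall>i\<in>{1,2}. \<forall>k\<in>{0..n i}. 0 < p0 i k)
            \<and> (\<forall>i\<in>{1,2}. \<forall>k\<in>{1..n i}. 0 \<le> f0 i k \<and> 0 \<le> b0 i k)
            \<and> \<not> ((\<lambda>t. nu_f_ss1 (traj g \<delta> fbar bbar n l (p0, f0, b0) t)) \<longlonglongrightarrow> 1))"
proof -
  have gF: "continuous_on {0..1/2} g" "mono_on {0..1/2} g" "g 0 = 0" "g (1/2) = 1/2"
    using assms(7) by (auto simp: family_F_def)
  obtain x0 where x0: "0 \<le> x0" "x0 \<le> 1/2" "g x0 \<noteq> x0" using assms(8) by auto
  show ?thesis
  proof (cases "g x0 < x0")
    case True
    show ?thesis by (rule caseA[OF assms(1-6) gF x0(1,2) True])
  next
    case False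
    then have "g x0 > x0" using x0(3) by linarith
    then show ?thesis by (rule caseB[OF assms(1-6) gF x0(1,2)])
  qed
qed

end
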